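(* Let $p$ be a prime number and let $d$ be a positive integer dividing $p^n+1$ for some positive integer $n$. Then: (i) there is a positive integer $k$ such that $v_2(\ell_p(r))=k$ for every odd prime factor $r$ of $d$; (ii) if $p>2$ and $k=1$, then $v_2(d)\le v_2(p+1)$, while if $p>2$ and $k>1$, then $v_2(d)\le 1$.
   Context: For coprime integers $a,b$ with $b>0$, $\ell_a(b)$ denotes the multiplicative order of $a$ modulo $b$. For a prime $l$ and positive integer $n$, $v_l(n)$ denotes the exponent of $l$ in the prime factorization of $n$. *)

theory Defs
  imports "HOL-Number_Theory.Number_Theory"
begin

end

theory Submission
  imports Defs
begin

lemma odd_pow_factor:
  fixes p :: int and n :: nat
  assumes "odd p" "odd n"
  shows "\<exists>q. p ^ n + 1 = (p + 1) * q \<and> odd q"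
  using assms(2)
proof (induction n rule: nat_less_induct)
  case (1 n)
  show ?case
  proof (cases "n = 1")
    case True then show ?thesis by (intro exI[of _ 1]) auto
  next
    case False
    define m where "m = n - 2"
    have m: "n = m + 2" "odd m" using "1.prems" False unfolding m_def by presburger+
    have "m < n" using m by simp
    then obtain q where q: "p ^ m + 1 = (p + 1) * q" "odd q" using "1.IH" m(2) by blast
    have "p ^ n + 1 = (p + 1) * (p^2 * q - p + 1)"
    proof -
      have "p ^ n + 1 = p^2 * (p^m + 1) - (p - 1) * (p + 1)"
        by (simp add: m power_add algebra_simps power2_eq_square)
      also have "\<dots> = (p + 1) * (p^2 * q - p + 1)"
        unfolding q(1) by (simp add: algebra_simps power2_eq_square)
      finally show ?thesis .
    qed
    moreover have "odd (p^2 * q - p + 1)" using q(2) assms(1) by simp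
    ultimately show ?thesis by blast
  qed
qed

lemma odd_pow_factor_nat:
  fixes p n :: nat
  assumes "odd p" "odd n"
  shows "\<exists>q. p ^ n + 1 = (p + 1) * q \<and> odd q"
proof -
  obtain q where q: "int p ^ n + 1 = (int p + 1) * q" "odd q"
    using odd_pow_factor[of "int p" n] assms by auto
  have "q > 0"
  proof (rule ccontr)
    assume "\<not> q > 0"
    then have "(int p + 1) * q \<le> 0" by (simp add: mult_nonneg_nonpos)
    moreover have "int p ^ n + 1 > 0" by (simp add: add_pos_nonneg)
    ultimately show False using q(1) by simp
  qed
  then have "q = int (nat q)" by simp
  then have "int (p ^ n + 1) = int ((p + 1) * nat q)" using q(1) \<open>q > 0\<close> by (simp add: algebra_simps)
  then have "p ^ n + 1 = (p + 1) * nat q" by linarith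
  moreover have "odd (nat q)" using q(2) \<open>q > 0\<close> by (simp add: even_nat_iff)
  ultimately show ?thesis by blast
qed

lemma v2_odd_case:
  fixes p n :: nat
  assumes "odd p" "odd n"
  shows "multiplicity 2 (p ^ n + 1) = multiplicity 2 (p + 1)"
proof -
  obtain q where q: "p ^ n + 1 = (p + 1) * q" "odd q" using odd_pow_factor_nat assms by blast
  have "q \<noteq> 0" by (rule notI) (use q(2) in simp)
  have "multiplicity 2 ((p + 1) * q) = multiplicity 2 (p + 1) + multiplicity 2 q"
    by (rule prime_elem_multiplicity_mult_distrib) (use \<open>q \<noteq> 0\<close> in auto)
  moreover have "multiplicity 2 q = 0" using q(2) by (simp add: not_dvd_imp_multiplicity_0)
  ultimately show ?thesis using q(1) by simp
qed

lemma v2_even_case: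
  fixes p n :: nat
  assumes "odd p" "even n"
  shows "multiplicity 2 (p ^ n + 1) \<le> 1"
proof -
  obtain m where m: "n = 2 * m" using assms(2) by blast
  have "p^2 mod 4 = 1"
  proof -
    obtain t where "p = 2 * t + 1" using assms(1) oddE by blast
    then have "p^2 = 4 * (t * t + t) + 1" by (simp add: power2_eq_square algebra_simps)
    then show ?thesis by simp
  qed
  have "(p^2)^m mod 4 = ((p^2) mod 4)^m mod 4" by (rule power_mod[symmetric])
  then have pm: "p^n mod 4 = 1" using \<open>p^2 mod 4 = 1\<close> by (simp add: m power_mult)
  have "(p ^ n + 1) mod 4 = (p^n mod 4 + 1) mod 4" by (rule mod_add_left_eq[symmetric])
  then have "(p ^ n + 1) mod 4 = 2" using pm by simp
  then have "\<not> 2^2 dvd (p ^ n + 1)" by (simp add: dvd_eq_mod_eq_0)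
  then show ?thesis using power_dvd_iff_le_multiplicity[where p="2::nat" and n=2 and x="p^n+1"] by auto
qed

lemma v2_ord:
  fixes m n :: nat
  assumes "m dvd 2 * n" "\<not> m dvd n" "n > 0"
  shows "multiplicity 2 m = multiplicity 2 n + 1"
proof -
  obtain t where t: "2 * n = m * t" using assms(1) by blast
  have "m \<noteq> 0" "t \<noteq> 0" using t assms(3) by (metis mult_0 mult_0_right mult_is_0 not_gr0 zero_neq_numeral)+
  have e1: "multiplicity 2 (2 * n) = multiplicity 2 n + 1"
    using assms(3) by (simp add: prime_elem_multiplicity_mult_distrib)
  have e2: "multiplicity 2 (m * t) = multiplicity 2 m + multiplicity 2 t"
    using \<open>m \<noteq> 0\<close> \<open>t \<noteq> 0\<close> by (simp add: prime_elem_multiplicity_mult_distrib)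
  have "odd t"
  proof
    assume "even t"
    then obtain s where "t = 2 * s" by blast
    then have "n = m * s" using t by simp
    then show False using assms(2) by simp
  qed
  then have "multiplicity 2 t = 0" by (simp add: not_dvd_imp_multiplicity_0)
  then show ?thesis using e1 e2 t by simp
qed

lemma sq_aux: "(x::nat) \<ge> 1 \<Longrightarrow> x * x = (x + 1) * (x - 1) + 1"
  by (cases x) (simp_all add: algebra_simps)

lemma ord_part:
  fixes p r n :: nat
  assumes "prime r" "odd r" "r dvd p ^ n + 1" "n > 0"
  shows "multiplicity 2 (ord r p) = multiplicity 2 n + 1"
proof -
  have "r \<ge> 2" using assms(1) prime_ge_2_nat by blast
  moreover have "r \<noteq> 2" using assms(2) by auto
  ultimately have r3: "r \<ge> 3" by linarith
  have c0: "[p ^ n + 1 = 0] (mod r)" using assms(3) by (simp add: cong_0_iff)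
  have "p \<noteq> 0"
  proof
    assume "p = 0"
    then have "r dvd 1" using assms(3,4) by (simp add: power_0_left)
    then show False using assms(1) by simp
  qed
  then have "p ^ n \<ge> 1" by simp
  have "p ^ (2 * n) = p ^ n * p ^ n" by (simp add: mult_2 power_add)
  also have "\<dots> = (p ^ n + 1) * (p ^ n - 1) + 1" by (rule sq_aux) fact
  finally have eq: "p ^ (2 * n) = (p ^ n + 1) * (p ^ n - 1) + 1" .
  have "[(p ^ n + 1) * (p ^ n - 1) + 1 = 0 * (p ^ n - 1) + 1] (mod r)"
    by (intro cong_add cong_mult c0 cong_refl)
  then have c1: "[p ^ (2 * n) = 1] (mod r)" using eq by simp
  have c2: "\<not> [p ^ n = 1] (mod r)"
  proof
    assume "[p ^ n = 1] (mod r)"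
    then have "[p ^ n + 1 = 1 + 1] (mod r)" by (intro cong_add cong_refl)
    then have "[p ^ n + 1 = 2] (mod r)" by (simp add: numeral_2_eq_2)
    then have "[2 = 0] (mod r)" by (rule cong_trans[OF cong_sym c0])
    then have "r dvd 2" by (simp add: cong_0_iff)
    then have "r \<le> 2" by (rule dvd_imp_le) simp
    then show False using r3 by simp
  qed
  have d1: "ord r p dvd 2 * n" using c1 ord_divides by blast
  have d2: "\<not> ord r p dvd n" using c2 ord_divides by blast
  show ?thesis using v2_ord[OF d1 d2 assms(4)] .
qed

theorem lemma1:
  fixes p d n :: nat
  assumes "prime p" and "d > 0" and "n > 0" and "d dvd p ^ n + 1"
  shows "\<exists>k::nat. k > 0 \<and>
           (\<forall>r. prime r \<and> odd r \<and> r dvd d \<longrightarrow> multiplicity 2 (ord r p) = k) \<and>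
           (p > 2 \<and> k = 1 \<longrightarrow> multiplicity 2 d \<le> multiplicity 2 (p + 1)) \<and>
           (p > 2 \<and> k > 1 \<longrightarrow> multiplicity 2 d \<le> 1)"
proof (intro exI[of _ "multiplicity 2 n + 1"] conjI allI impI)
  fix r assume "prime r \<and> odd r \<and> r dvd d"
  then show "multiplicity 2 (ord r p) = multiplicity 2 n + 1"
    using ord_part[of r p n] assms dvd_trans by blast
next
  have le: "multiplicity 2 d \<le> multiplicity 2 (p ^ n + 1)"
    using assms(4) by (intro dvd_imp_multiplicity_le) auto
  {
    assume a: "2 < p \<and> multiplicity 2 n + 1 = 1"
    then have "odd p" using assms(1) prime_odd_nat by auto
    moreover have "odd n"
    proof
      assume "even n"
      then have "1 \<le> multiplicity 2 n"
        using power_dvd_iff_le_multiplicity[where p="2::nat" and n=1 and x=n] assms(3) by simp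
      then show False using a by simp
    qed
    ultimately have "multiplicity 2 (p ^ n + 1) = multiplicity 2 (p + 1)" by (rule v2_odd_case)
    then show "multiplicity 2 d \<le> multiplicity 2 (p + 1)" using le by linarith
  }
  {
    assume a: "2 < p \<and> 1 < multiplicity 2 n + 1"
    then have "odd p" using assms(1) prime_odd_nat by auto
    moreover have "even n"
    proof (rule ccontr)
      assume "odd n"
      then have "multiplicity 2 n = 0" by (simp add: not_dvd_imp_multiplicity_0)
      then show False using a by simp
    qed
    ultimately have "multiplicity 2 (p ^ n + 1) \<le> 1" by (rule v2_even_case)
    then show "multiplicity 2 d \<le> 1" using le by linarith
  }
qed simp

end
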